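(* Let $p$ be an odd prime, $R=F_p+vF_p$ with $v^2=v$, let $\vartheta=1-2v$ or $\vartheta=-1+2v$, and let $C$ be a $\vartheta$-constacyclic code of length $n$ over $R$ with generating set in standard form $\{vg_{1-v}(x),(1-v)g_v(x)\}$. Then: (1) $\phi_\vartheta(C^\perp)=[h_{1-v}^*(x)h_v^*(x)]$; (2) $\phi_\vartheta(C^\perp)=(\phi_\vartheta(C))^\perp$.
   Context: Write $\vartheta=\lambda+v\mu$ with $\lambda,\mu\in F_p$. A $\vartheta$-constacyclic code of length $n$ over $R$ is an $R$-submodule of $R^n$ closed under $(c_0,\dots,c_{n-1})\mapsto(\vartheta c_{n-1},c_0,\dots,c_{n-2})$, identified with an ideal of $R[x]/\langle x^n-\vartheta\rangle$ via $(c_i)\mapsto\sum c_ix^i$. Duals are with respect to the standard Euclidean inner product (on $R^n$ and on $F_p^{2n}$). A set $\{vg_1(x),(1-v)g_2(x)\}$ is a generating set in standard form for $C$ if it generates $C$ as an ideal, each $g_i\in F_p[x]$ is monic or $0$, $g_1\mid x^n-(\lambda+\mu)$ if $g_1\ne0$, and $g_2\mid x^n-\lambda$ if $g_2\ne0$. Let $h_{1-v},h_v\in F_p[x]$ be given by $g_{1-v}h_{1-v}=x^n-(\lambda+\mu)$ and $g_vh_v=x^n-\lambda$; for $h\in\{h_{1-v},h_v\}$, $h^*(x)=\frac{1}{h(0)}x^{\deg h}h(1/x)$. The Gray map $\phi_\vartheta:R^n\to F_p^{2n}$ sends $(c_0,\dots,c_{n-1})$ with $c_i=r_i+vq_i$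 to $(\lambda(\lambda+\mu)q_0,\dots,\lambda(\lambda+\mu)q_{n-1},-\mu r_0-(\lambda+\mu)q_0,\dots,-\mu r_{n-1}-(\lambda+\mu)q_{n-1})$; equivalently, in polynomial form, $r(x)+vq(x)\mapsto\lambda(\lambda+\mu)q(x)+x^n[-\mu r(x)-(\lambda+\mu)q(x)]\in F_p[x]/\langle x^{2n}-1\rangle$. For a monic divisor $g$ of $x^{2n}-1$, $[g(x)]$ denotes the cyclic code (ideal of $F_p[x]/\langle x^{2n}-1\rangle$) generated by $g$. *)

theory Defs
  imports "HOL-Computational_Algebra.Computational_Algebra"
begin

text \<open>Elements of R = F_p + v F_p (v^2 = v) are represented as pairs (r, q)
  standing for r + v q, with r, q in the field 'a (a field with p elements).\<close>

definition Radd :: "'a::comm_ring_1 \<times> 'a \<Rightarrow> 'a \<times> 'a \<Rightarrow> 'a \<times> 'a" where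
  "Radd x y = (fst x + fst y, snd x + snd y)"

text \<open>(r + vq)(r' + vq') = rr' + v(rq' + qr' + qq') since v^2 = v.\<close>
definition Rmul :: "'a::comm_ring_1 \<times> 'a \<Rightarrow> 'a \<times> 'a \<Rightarrow> 'a \<times> 'a" where
  "Rmul x y = (fst x * fst y, fst x * snd y + snd x * fst y + snd x * snd y)"

fun Rpow :: "'a::comm_ring_1 \<times> 'a \<Rightarrow> nat \<Rightarrow> 'a \<times> 'a" where
  "Rpow t 0 = (1, 0)"
| "Rpow t (Suc k) = Rmul t (Rpow t k)"

definition Rwords :: "nat \<Rightarrow> (nat \<Rightarrow> 'a::comm_ring_1 \<times> 'a) set" where
  "Rwords n = {c. \<forall>i\<ge>n. c i = (0, 0)}"

definition cshift :: "'a::comm_ring_1 \<times> 'a \<Rightarrow> nat \<Rightarrow> (nat \<Rightarrow> 'a \<times> 'a) \<Rightarrow> (nat \<Rightarrow> 'a \<times> 'a)" where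
  "cshift t n c = (\<lambda>i. if i = 0 then Rmul t (c (n - 1)) else if i < n then c (i - 1) else (0, 0))"

definition is_constacyclic :: "'a::comm_ring_1 \<times> 'a \<Rightarrow> nat \<Rightarrow> (nat \<Rightarrow> 'a \<times> 'a) set \<Rightarrow> bool" where
  "is_constacyclic t n C \<longleftrightarrow>
     C \<subseteq> Rwords n \<and> (\<lambda>i. (0, 0)) \<in> C \<and>
     (\<forall>c\<in>C. \<forall>d\<in>C. (\<lambda>i. Radd (c i) (d i)) \<in> C) \<and>
     (\<forall>a. \<forall>c\<in>C. (\<lambda>i. Rmul a (c i)) \<in> C) \<and>
     (\<forall>c\<in>C. cshift t n c \<in> C)"

text \<open>The ideal of R[x]/<x^n - theta> generated by a set S of words
  (= smallest constacyclic code containing S).\<close>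
definition gen_code :: "'a::comm_ring_1 \<times> 'a \<Rightarrow> nat \<Rightarrow> (nat \<Rightarrow> 'a \<times> 'a) set \<Rightarrow> (nat \<Rightarrow> 'a \<times> 'a) set" where
  "gen_code t n S = \<Inter> {D. is_constacyclic t n D \<and> S \<subseteq> D}"

text \<open>The word (element of R[x]/<x^n - theta>) represented by the polynomial
  r(x) + v q(x) in R[x], using x^(kn+i) = theta^k x^i.\<close>
definition polyword :: "'a::comm_ring_1 \<times> 'a \<Rightarrow> nat \<Rightarrow> 'a poly \<times> 'a poly \<Rightarrow> (nat \<Rightarrow> 'a \<times> 'a)" where
  "polyword t n f = (\<lambda>i. if i < n then
      ((\<Sum>k\<le>degree (fst f) + degree (snd f).
          fst (Rmul (Rpow t k) (coeff (fst f) (k * n + i), coeff (snd f) (k * n + i)))),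
       (\<Sum>k\<le>degree (fst f) + degree (snd f).
          snd (Rmul (Rpow t k) (coeff (fst f) (k * n + i), coeff (snd f) (k * n + i)))))
    else (0, 0))"

definition Rdual :: "nat \<Rightarrow> (nat \<Rightarrow> 'a::comm_ring_1 \<times> 'a) set \<Rightarrow> (nat \<Rightarrow> 'a \<times> 'a) set" where
  "Rdual n C = {d \<in> Rwords n. \<forall>c\<in>C.
      ((\<Sum>i<n. fst (Rmul (c i) (d i))), (\<Sum>i<n. snd (Rmul (c i) (d i)))) = (0, 0)}"

definition Fwords :: "nat \<Rightarrow> (nat \<Rightarrow> 'a::zero) set" where
  "Fwords m = {c. \<forall>i\<ge>m. c i = 0}"

definition Fdual :: "nat \<Rightarrow> (nat \<Rightarrow> 'a::comm_ring_1) set \<Rightarrow> (nat \<Rightarrow> 'a) set" where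
  "Fdual m D = {d \<in> Fwords m. \<forall>c\<in>D. (\<Sum>i<m. c i * d i) = 0}"

text \<open>Gray map phi_theta for theta = lam + v mu.\<close>
definition gray :: "'a::comm_ring_1 \<Rightarrow> 'a \<Rightarrow> nat \<Rightarrow> (nat \<Rightarrow> 'a \<times> 'a) \<Rightarrow> (nat \<Rightarrow> 'a)" where
  "gray lam mu n c = (\<lambda>i.
     if i < n then lam * (lam + mu) * snd (c i)
     else if i < 2 * n then - mu * fst (c (i - n)) - (lam + mu) * snd (c (i - n))
     else 0)"

definition cyc_code :: "nat \<Rightarrow> 'a::field poly \<Rightarrow> (nat \<Rightarrow> 'a) set" where
  "cyc_code m g = {(\<lambda>i. coeff ((g * f) mod (monom 1 m - 1)) i) | f. True}"

text \<open>h^*(x) = (1/h(0)) x^(deg h) h(1/x).\<close>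
definition recip :: "'a::field poly \<Rightarrow> 'a poly" where
  "recip h = smult (inverse (coeff h 0)) (reflect_poly h)"

end

theory Submission
  imports Defs
begin


definition Mp :: "'a::comm_ring_1 \<Rightarrow> nat \<Rightarrow> 'a poly" where
  "Mp s n = monom 1 n - [:s:]"

definition red :: "'a::comm_ring_1 \<Rightarrow> nat \<Rightarrow> nat \<Rightarrow> 'a poly \<Rightarrow> nat \<Rightarrow> 'a" where
  "red s n K P i = (\<Sum>k\<le>K. s^k * coeff P (k*n+i))"

lemma coeff_Mp: "coeff (Mp s n) i = (if i = n then 1 else 0) - (if i = 0 then s else 0)"
  by (simp add: Mp_def coeff_monom coeff_pCons split: nat.split)

lemma degree_Mp: "n > 0 \<Longrightarrow> degree (Mp s n) = n"
proof -
  assume n: "n > 0"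
  have "Mp s n = monom 1 n + [:-s:]" by (simp add: Mp_def)
  also have "degree \<dots> = n" using n by (subst degree_add_eq_left) (auto simp: degree_monom_eq)
  finally show ?thesis .
qed

lemma Mp_nz: "n > 0 \<Longrightarrow> Mp (s::'a::field) n \<noteq> 0"
  using degree_Mp[of n s] by auto

lemma mod_eq_by_dvd:
  fixes P r M :: "'a::field poly"
  assumes "degree r < degree M" "M dvd P - r"
  shows "P mod M = r"
proof -
  obtain q where q: "P - r = M * q" using assms(2) by blast
  have "P = r + q * M" using q by (simp add: algebra_simps)
  hence "P mod M = r mod M" by simp
  also have "\<dots> = r" using assms(1) by (rule mod_poly_less)
  finally show ?thesis .
qed

lemma SH0:
  fixes Z :: "'a::field poly"
  assumes n: "n > 0" and dZ: "degree Z < n"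
  shows "(pCons 0 Z) mod Mp s n = pCons 0 Z - smult (coeff Z (n-1)) (Mp s n)"
proof (rule mod_eq_by_dvd)
  let ?r = "pCons 0 Z - smult (coeff Z (n-1)) (Mp s n)"
  have "\<forall>i>n-1. coeff ?r i = 0"
  proof (intro allI impI)
    fix i assume i: "i > n - 1"
    show "coeff ?r i = 0"
    proof (cases "i = n")
      case True thus ?thesis using n by (simp add: coeff_Mp coeff_pCons split: nat.split)
    next
      case False
      hence "i > n" using i by simp
      hence "coeff Z (i-1) = 0" using dZ by (intro coeff_eq_0) simp
      thus ?thesis using \<open>i > n\<close> by (auto simp: coeff_Mp coeff_pCons split: nat.split)
    qed
  qed
  hence "degree ?r \<le> n - 1" by (intro degree_le) auto
  thus "degree ?r < degree (Mp s n)" using n by (simp add: degree_Mp)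
  show "Mp s n dvd pCons 0 Z - ?r" by (simp add: dvd_smult)
qed

lemma pCons0_mult: "pCons 0 (Z::'a::comm_ring_1 poly) = [:0,1:] * Z"
  by simp

lemma SHc:
  fixes Z :: "'a::field poly"
  assumes n: "n > 0" and i: "i < n"
  shows "coeff ((pCons 0 Z) mod Mp s n) i =
    (if i = 0 then s * coeff (Z mod Mp s n) (n-1) else coeff (Z mod Mp s n) (i-1))"
proof -
  have "(pCons 0 Z) mod Mp s n = (pCons 0 (Z mod Mp s n)) mod Mp s n"
    by (metis pCons0_mult mod_mult_right_eq)
  also have "\<dots> = pCons 0 (Z mod Mp s n) - smult (coeff (Z mod Mp s n) (n-1)) (Mp s n)"
  proof (rule SH0[OF n])
    show "degree (Z mod Mp s n) < n"
    proof (cases "Z mod Mp s n = 0")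
      case False
      thus ?thesis using degree_mod_less'[OF Mp_nz[OF n] False] degree_Mp[OF n, of s] by simp
    qed (use n in simp)
  qed
  finally show ?thesis using i n
    by (auto simp: coeff_Mp coeff_pCons split: nat.split)
qed


lemma deg_mod_Mp:
  fixes Z :: "'a::field poly"
  assumes n: "n > 0"
  shows "degree (Z mod Mp s n) < n"
proof (cases "Z mod Mp s n = 0")
  case False
  thus ?thesis using degree_mod_less'[OF Mp_nz[OF n] False] degree_Mp[OF n, of s] by simp
qed (use n in simp)

lemma red_split:
  "red s n K Q i = coeff Q i + (\<Sum>k<K. s^(Suc k) * coeff Q (Suc k * n + i))"
  unfolding red_def by (subst sum.atMost_shift) simp

lemma GM:
  fixes P :: "'a::field poly"
  assumes n: "n > 0"
  shows "degree P \<le> K \<Longrightarrow> i < n \<Longrightarrow> coeff (P mod Mp s n) i = red s n K P i"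
proof (induction P arbitrary: K i rule: pCons_induct)
  case 0
  thus ?case by (simp add: red_def)
next
  case (pCons a P)
  have Mdeg: "degree [:a:] < degree (Mp s n)" using n degree_Mp[OF n, of s] by simp
  show ?case
  proof (cases "P = 0")
    case True
    have "coeff (pCons a P mod Mp s n) i = coeff [:a:] i"
      using True mod_poly_less[OF Mdeg] by simp
    also have "\<dots> = red s n K (pCons a P) i"
    proof -
      have "coeff (pCons a P) (Suc k * n + i) = 0" for k
      proof -
        have e: "Suc k * n + i = Suc (k * n + (n-1) + i)" using n by simp
        show ?thesis unfolding e coeff_pCons_Suc using True by simp
      qed
      thus ?thesis using True by (simp add: red_split)
    qed
    finally show ?thesis .
  next
    case False
    then obtain K' where K: "K = Suc K'" and dP: "degree P \<le> K'"
      using pCons.prems(1) by (cases K) auto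
    have dP2: "degree P \<le> K" using dP K by simp
    have "pCons a P = [:a:] + pCons 0 P" by simp
    hence "pCons a P mod Mp s n = [:a:] mod Mp s n + pCons 0 P mod Mp s n"
      by (metis poly_mod_add_left)
    hence eq: "coeff (pCons a P mod Mp s n) i = coeff [:a:] i + coeff (pCons 0 P mod Mp s n) i"
      using mod_poly_less[OF Mdeg] by simp
    show ?thesis
    proof (cases "i = 0")
      case True
      have "coeff (pCons a P mod Mp s n) i = a + s * red s n K' P (n-1)"
        using eq True SHc[OF n, of 0 P s] pCons.IH[OF dP, of "n-1"] n by simp
      also have "\<dots> = red s n K (pCons a P) i"
      proof -
        have "(\<Sum>k<K. s^(Suc k) * coeff (pCons a P) (Suc k * n + i))
              = s * (\<Sum>k\<le>K'. s^k * coeff P (k * n + (n-1)))"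
          unfolding K lessThan_Suc_atMost[symmetric] sum_distrib_left
        proof (rule sum.cong[OF refl])
          fix k
          have e: "Suc k * n + i = Suc (k * n + (n-1))" using True n by simp
          show "s^(Suc k) * coeff (pCons a P) (Suc k * n + i) = s * (s^k * coeff P (k * n + (n-1)))"
            unfolding e coeff_pCons_Suc by simp
        qed
        thus ?thesis unfolding red_split[of s n K "pCons a P" i] using True by (simp add: red_def)
      qed
      finally show ?thesis .
    next
      case False
      have "coeff (pCons a P mod Mp s n) i = red s n K P (i-1)"
        using eq False SHc[OF n pCons.prems(2), of P s] pCons.IH[OF dP2, of "i-1"] pCons.prems(2)
        by (simp add: coeff_pCons split: nat.split)
      also have "\<dots> = red s n K (pCons a P) i"
      proof -
        have "(\<Sum>k<K. s^(Suc k) * coeff (pCons a P) (Suc k * n + i))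
              = (\<Sum>k<K. s^(Suc k) * coeff P (Suc k * n + (i-1)))"
        proof (rule sum.cong[OF refl])
          fix k
          have e: "Suc k * n + i = Suc (Suc k * n + (i-1))" using False by simp
          show "s^(Suc k) * coeff (pCons a P) (Suc k * n + i) = s^(Suc k) * coeff P (Suc k * n + (i-1))"
            unfolding e coeff_pCons_Suc by simp
        qed
        thus ?thesis using False by (simp add: red_split coeff_pCons split: nat.split)
      qed
      finally show ?thesis .
    qed
  qed
qed



definition W :: "'a::field \<Rightarrow> 'a \<Rightarrow> nat \<Rightarrow> 'a poly \<Rightarrow> 'a poly \<Rightarrow> nat \<Rightarrow> 'a \<times> 'a" where
  "W lam mu n P Q = (\<lambda>i. if i < n then (coeff (Q mod Mp lam n) i,
      coeff (P mod Mp (lam+mu) n) i - coeff (Q mod Mp lam n) i) else (0,0))"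

lemma W_add: "(\<lambda>i. Radd (W lam mu n P Q i) (W lam mu n P' Q' i)) = W lam mu n (P+P') (Q+Q')"
  by (rule ext) (simp add: W_def Radd_def poly_mod_add_left)

lemma W_mul: "(\<lambda>i. Rmul a (W lam mu n P Q i)) = W lam mu n (smult (fst a + snd a) P) (smult (fst a) Q)"
  by (rule ext) (simp add: W_def Rmul_def mod_smult_left algebra_simps)


lemma W_add_pt: "Radd (W lam mu n P Q i) (W lam mu n P' Q' i) = W lam mu n (P+P') (Q+Q') i"
  by (rule fun_cong[OF W_add])

lemma W_mul_pt: "Rmul a (W lam mu n P Q i) = W lam mu n (smult (fst a + snd a) P) (smult (fst a) Q) i"
  by (rule fun_cong[OF W_mul])

lemma W_zero: "W lam mu n 0 0 = (\<lambda>i. (0,0))"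
  by (rule ext) (simp add: W_def)

lemma W_Rwords: "W lam mu n P Q \<in> Rwords n"
  by (simp add: W_def Rwords_def)

lemma W_shift:
  assumes n: "n > 0"
  shows "cshift (lam,mu) n (W lam mu n P Q) = W lam mu n (pCons 0 P) (pCons 0 Q)"
proof (rule ext)
  fix i
  show "cshift (lam,mu) n (W lam mu n P Q) i = W lam mu n (pCons 0 P) (pCons 0 Q) i"
  proof (cases "i < n")
    case True
    show ?thesis
      using True n SHc[OF n True, of P "lam+mu"] SHc[OF n True, of Q lam]
      by (simp add: cshift_def W_def Rmul_def algebra_simps)
  qed (use n in \<open>simp add: cshift_def W_def\<close>)
qed

lemma Rpow_eq: "Rpow (l, m) k = (l^k, (l+m)^k - l^k)"
  by (induction k) (simp_all add: Rmul_def algebra_simps)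

lemma polyword_W:
  assumes n: "n > 0"
  shows "polyword (lam,mu) n (f1,f2) = W lam mu n (f1+f2) f1"
proof (rule ext)
  fix i
  let ?K = "degree f1 + degree f2"
  have d1: "degree f1 \<le> ?K" by simp
  have d2: "degree (f1 + f2) \<le> ?K" using degree_add_le[of f1 ?K f2] by simp
  show "polyword (lam,mu) n (f1,f2) i = W lam mu n (f1+f2) f1 i"
  proof (cases "i < n")
    case True
    have A: "(\<Sum>k\<le>?K. fst (Rmul (Rpow (lam, mu) k) (coeff f1 (k * n + i), coeff f2 (k * n + i))))
          = red lam n ?K f1 i"
      by (simp add: red_def Rpow_eq Rmul_def)
    have B: "(\<Sum>k\<le>?K. snd (Rmul (Rpow (lam, mu) k) (coeff f1 (k * n + i), coeff f2 (k * n + i))))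
          = red (lam+mu) n ?K (f1+f2) i - red lam n ?K f1 i"
      by (simp add: red_def Rpow_eq Rmul_def sum_subtractf[symmetric] algebra_simps)
    show ?thesis using True
      unfolding polyword_def W_def fst_conv snd_conv A B
      using GM[OF n d1 True, of lam] GM[OF n d2 True, of "lam+mu"] by simp
  qed (simp add: polyword_def W_def)
qed



lemma gen_code_sub: "S \<subseteq> gen_code t n S"
  unfolding gen_code_def by blast

lemma gen_code_least: "is_constacyclic t n D \<Longrightarrow> S \<subseteq> D \<Longrightarrow> gen_code t n S \<subseteq> D"
  unfolding gen_code_def by blast

lemma C_char:
  fixes g1 g2 :: "'a::field poly"
  assumes n: "n > 0" and cc: "is_constacyclic (lam, mu) n C"
    and gen: "C = gen_code (lam, mu) n
               {polyword (lam, mu) n (0, g1), polyword (lam, mu) n (g2, - g2)}"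
  shows "C = {W lam mu n (g1*u) (g2*w) | u w. True}"
proof -
  have pw1: "polyword (lam, mu) n (0, g1) = W lam mu n g1 0" using polyword_W[OF n, of lam mu 0 g1] by simp
  have pw2: "polyword (lam, mu) n (g2, - g2) = W lam mu n 0 g2" using polyword_W[OF n, of lam mu g2 "-g2"] by simp
show ?thesis
proof
  let ?D = "{W lam mu n (g1*u) (g2*w) | u w. True}"
  show "C \<subseteq> ?D" unfolding gen
  proof (rule gen_code_least)
    show "{polyword (lam, mu) n (0, g1), polyword (lam, mu) n (g2, - g2)} \<subseteq> ?D"
      unfolding pw1 pw2
    proof -
      have "W lam mu n g1 0 = W lam mu n (g1*1) (g2*0)" by simp
      moreover have "W lam mu n 0 g2 = W lam mu n (g1*0) (g2*1)" by simp
      ultimately show "{W lam mu n g1 0, W lam mu n 0 g2} \<subseteq> ?D" by blast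
    qed
    show "is_constacyclic (lam, mu) n ?D"
      unfolding is_constacyclic_def
    proof (intro conjI ballI allI)
      show "?D \<subseteq> Rwords n" using W_Rwords by blast
      have "W lam mu n (g1*0) (g2*0) = (\<lambda>i. (0, 0))" using W_zero by simp
      thus "(\<lambda>i. (0, 0)) \<in> ?D" by (metis (mono_tags, lifting) mem_Collect_eq)
    next
      fix c d assume "c \<in> ?D" "d \<in> ?D"
      then obtain u w u' w' where c: "c = W lam mu n (g1*u) (g2*w)" and d: "d = W lam mu n (g1*u') (g2*w')"
        by blast
      have "(\<lambda>i. Radd (c i) (d i)) = W lam mu n (g1*(u+u')) (g2*(w+w'))"
        unfolding c d W_add by (simp add: distrib_left)
      thus "(\<lambda>i. Radd (c i) (d i)) \<in> ?D" by blast
    next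
      fix a c assume "c \<in> ?D"
      then obtain u w where c: "c = W lam mu n (g1*u) (g2*w)" by blast
      have "(\<lambda>i. Rmul a (c i)) = W lam mu n (g1*smult (fst a + snd a) u) (g2*smult (fst a) w)"
        unfolding c W_mul by simp
      thus "(\<lambda>i. Rmul a (c i)) \<in> ?D" by blast
    next
      fix c assume "c \<in> ?D"
      then obtain u w where c: "c = W lam mu n (g1*u) (g2*w)" by blast
      have "cshift (lam, mu) n c = W lam mu n (g1*pCons 0 u) (g2*pCons 0 w)"
        unfolding c W_shift[OF n] by simp
      thus "cshift (lam, mu) n c \<in> ?D" by blast
    qed
  qed
next
  show "{W lam mu n (g1*u) (g2*w) | u w. True} \<subseteq> C"
  proof -
    have cl: "C \<subseteq> Rwords n \<and> (\<lambda>i. (0, 0)) \<in> C \<and>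
     (\<forall>c\<in>C. \<forall>d\<in>C. (\<lambda>i. Radd (c i) (d i)) \<in> C) \<and>
     (\<forall>a. \<forall>c\<in>C. (\<lambda>i. Rmul a (c i)) \<in> C) \<and>
     (\<forall>c\<in>C. cshift (lam, mu) n c \<in> C)" using cc unfolding is_constacyclic_def .
    have addC: "\<And>c d. c\<in>C \<Longrightarrow> d\<in>C \<Longrightarrow> (\<lambda>i. Radd (c i) (d i)) \<in> C"
      and mulC: "\<And>a c. c\<in>C \<Longrightarrow> (\<lambda>i. Rmul a (c i)) \<in> C"
      and shC: "\<And>c. c\<in>C \<Longrightarrow> cshift (lam, mu) n c \<in> C" using cl by blast+
    have g1C: "W lam mu n g1 0 \<in> C" and g2C: "W lam mu n 0 g2 \<in> C"
    proof -
      have "{polyword (lam, mu) n (0, g1), polyword (lam, mu) n (g2, - g2)} \<subseteq> C"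
        unfolding gen by (rule gen_code_sub)
      thus "W lam mu n g1 0 \<in> C" "W lam mu n 0 g2 \<in> C" unfolding pw1 pw2 by auto
    qed
    have U: "W lam mu n (g1*u) 0 \<in> C" for u
    proof (induction u)
      case 0
      have "(\<lambda>i. (0, 0)) \<in> C" using cl by blast
      thus ?case by (simp add: W_zero)
    next
      case (pCons a u)
      have "(\<lambda>i. Radd (Rmul (a,0) (W lam mu n g1 0 i)) (cshift (lam,mu) n (W lam mu n (g1*u) 0) i))
            = W lam mu n (g1 * pCons a u) 0"
      proof -
        have "(\<lambda>i. Radd (Rmul (a,0) (W lam mu n g1 0 i)) (cshift (lam,mu) n (W lam mu n (g1*u) 0) i))
            = (\<lambda>i. Radd (W lam mu n (smult a g1) 0 i) (W lam mu n (pCons 0 (g1*u)) 0 i))"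
          unfolding W_shift[OF n] W_mul_pt by simp
        also have "\<dots> = W lam mu n (smult a g1 + pCons 0 (g1*u)) 0"
          unfolding W_add_pt by simp
        also have "smult a g1 + pCons 0 (g1*u) = g1 * pCons a u" by simp
        finally show ?thesis .
      qed
      moreover have "(\<lambda>i. Radd (Rmul (a,0) (W lam mu n g1 0 i)) (cshift (lam,mu) n (W lam mu n (g1*u) 0) i)) \<in> C"
        by (rule addC[OF mulC[OF g1C] shC[OF pCons.IH]])
      ultimately show ?case by simp
    qed
    have V: "W lam mu n 0 (g2*w) \<in> C" for w
    proof (induction w)
      case 0
      have "(\<lambda>i. (0, 0)) \<in> C" using cl by blast
      thus ?case by (simp add: W_zero)
    next
      case (pCons a w)
      have "(\<lambda>i. Radd (Rmul (a,0) (W lam mu n 0 g2 i)) (cshift (lam,mu) n (W lam mu n 0 (g2*w)) i))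
            = W lam mu n 0 (g2 * pCons a w)"
      proof -
        have "(\<lambda>i. Radd (Rmul (a,0) (W lam mu n 0 g2 i)) (cshift (lam,mu) n (W lam mu n 0 (g2*w)) i))
            = (\<lambda>i. Radd (W lam mu n 0 (smult a g2) i) (W lam mu n 0 (pCons 0 (g2*w)) i))"
          unfolding W_shift[OF n] W_mul_pt by simp
        also have "\<dots> = W lam mu n 0 (smult a g2 + pCons 0 (g2*w))"
          unfolding W_add_pt by simp
        also have "smult a g2 + pCons 0 (g2*w) = g2 * pCons a w" by simp
        finally show ?thesis .
      qed
      moreover have "(\<lambda>i. Radd (Rmul (a,0) (W lam mu n 0 g2 i)) (cshift (lam,mu) n (W lam mu n 0 (g2*w)) i)) \<in> C"
        by (rule addC[OF mulC[OF g2C] shC[OF pCons.IH]])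
      ultimately show ?case by simp
    qed
    show ?thesis
    proof
      fix c assume "c \<in> {W lam mu n (g1*u) (g2*w) | u w. True}"
      then obtain u w where c: "c = W lam mu n (g1*u) (g2*w)" by blast
      have "c = (\<lambda>i. Radd (W lam mu n (g1*u) 0 i) (W lam mu n 0 (g2*w) i))"
        unfolding c W_add by simp
      thus "c \<in> C" using addC[OF U V] by simp
    qed
  qed
qed

qed



lemma sum2: "(\<Sum>i<2*(n::nat). f i) = (\<Sum>i<n. f i) + (\<Sum>i<n. f (i+n))"
proof -
  have "(\<Sum>i<2*n. f i) = sum f {0..<n} + sum f {n..<2*n}"
    by (simp add: sum.atLeastLessThan_concat atLeast0LessThan[symmetric])
  also have "sum f {n..<2*n} = sum f {0+n..<n+n}" by (simp add: mult_2)
  also have "\<dots> = (\<Sum>i=0..<n. f (i+n))" by (rule sum.shift_bounds_nat_ivl)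
  finally show ?thesis by (simp add: atLeast0LessThan)
qed

definition IA :: "nat \<Rightarrow> (nat \<Rightarrow> 'a::comm_ring_1 \<times> 'a) \<Rightarrow> (nat \<Rightarrow> 'a \<times> 'a) \<Rightarrow> 'a" where
  "IA n c d = (\<Sum>i<n. (fst (c i) + snd (c i)) * (fst (d i) + snd (d i)))"
definition IB :: "nat \<Rightarrow> (nat \<Rightarrow> 'a::comm_ring_1 \<times> 'a) \<Rightarrow> (nat \<Rightarrow> 'a \<times> 'a) \<Rightarrow> 'a" where
  "IB n c d = (\<Sum>i<n. fst (c i) * fst (d i))"

lemma gray_ip:
  fixes lam mu :: "'a::field"
  assumes hl: "lam * lam = 1" and hs: "mu = -2*lam"
  shows "(\<Sum>i<2*n. gray lam mu n c i * gray lam mu n d i) = 2 * (IA n c d + IB n c d)"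
proof -
  have "(\<Sum>i<2*n. gray lam mu n c i * gray lam mu n d i)
     = (\<Sum>i<n. snd (c i) * snd (d i)) +
       (\<Sum>i<n. (2*lam*fst (c i) + lam * snd (c i)) * (2*lam*fst (d i) + lam * snd (d i)))"
    unfolding sum2 
  proof (intro arg_cong2[where f="(+)"] sum.cong refl)
    fix i assume "i \<in> {..<n}"
    hence i: "i < n" by simp
    have "lam * (lam + mu) = -1" using hl hs by (simp add: algebra_simps)
    thus "gray lam mu n c i * gray lam mu n d i = snd (c i) * snd (d i)"
      using i unfolding gray_def by (simp add: algebra_simps)
    show "gray lam mu n c (i+n) * gray lam mu n d (i+n) =
       (2*lam*fst (c i) + lam * snd (c i)) * (2*lam*fst (d i) + lam * snd (d i))"
      using i hs unfolding gray_def by (simp add: algebra_simps)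
  qed
  also have "\<dots> = (\<Sum>i<n. 2 * ((fst (c i) + snd (c i)) * (fst (d i) + snd (d i))) + 2 * (fst (c i) * fst (d i)))"
    unfolding sum.distrib[symmetric]
  proof (rule sum.cong[OF refl])
    fix i
    let ?r = "fst (c i)" and ?q = "snd (c i)" and ?r' = "fst (d i)" and ?q' = "snd (d i)"
    have "(2*lam*?r + lam * ?q) * (2*lam*?r' + lam * ?q') = (lam*lam) * ((2*?r + ?q) * (2*?r' + ?q'))"
      by (simp add: algebra_simps)
    also have "\<dots> = (2*?r + ?q) * (2*?r' + ?q')" using hl by simp
    finally show "?q * ?q' + (2*lam*?r + lam * ?q) * (2*lam*?r' + lam * ?q') =
          2 * ((?r + ?q) * (?r' + ?q')) + 2 * (?r * ?r')"
      by (simp add: algebra_simps)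
  qed
  also have "\<dots> = 2 * (IA n c d + IB n c d)"
    unfolding IA_def IB_def by (simp add: sum.distrib sum_distrib_left distrib_left)
  finally show ?thesis .
qed

lemma R_ip:
  "((\<Sum>i<n. fst (Rmul (c i) (d i))), (\<Sum>i<n. snd (Rmul (c i) (d i)))) = (0, 0)
   \<longleftrightarrow> IA n c d = 0 \<and> IB n c d = 0"
proof -
  have "(\<Sum>i<n. snd (Rmul (c i) (d i))) = IA n c d - IB n c d"
    unfolding IA_def IB_def sum_subtractf[symmetric]
    by (rule sum.cong) (simp_all add: Rmul_def algebra_simps)
  moreover have "(\<Sum>i<n. fst (Rmul (c i) (d i))) = IB n c d"
    unfolding IB_def by (simp add: Rmul_def)
  ultimately show ?thesis by auto
qed

lemma IA_v: "IA n (\<lambda>i. Rmul (0,1) (c i)) d = IA n c d"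
  unfolding IA_def by (simp add: Rmul_def)
lemma IB_v: "IB n (\<lambda>i. Rmul (0,1) (c i)) d = 0"
  unfolding IB_def by (simp add: Rmul_def)
lemma IA_w: "IA n (\<lambda>i. Rmul (1,-1) (c i)) d = 0"
  unfolding IA_def by (simp add: Rmul_def)
lemma IB_w: "IB n (\<lambda>i. Rmul (1,-1) (c i)) d = IB n c d"
  unfolding IB_def by (simp add: Rmul_def)

lemma L3:
  fixes lam mu :: "'a::field"
  assumes hl: "lam * lam = 1" and hs: "mu = -2*lam" and two: "(2::'a) \<noteq> 0"
    and mulC: "\<And>a c. c \<in> C \<Longrightarrow> (\<lambda>i. Rmul a (c i)) \<in> C"
  shows "gray lam mu n ` Rdual n C = Fdual (2*n) (gray lam mu n ` C)"
proof
  show "gray lam mu n ` Rdual n C \<subseteq> Fdual (2*n) (gray lam mu n ` C)"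
  proof
    fix e assume "e \<in> gray lam mu n ` Rdual n C"
    then obtain d where d: "d \<in> Rdual n C" and e: "e = gray lam mu n d" by blast
    have "e \<in> Fwords (2*n)" unfolding e Fwords_def gray_def by auto
    moreover have "(\<Sum>i<2*n. x i * e i) = 0" if xin: "x \<in> gray lam mu n ` C" for x
    proof -
      obtain c where c: "c \<in> C" and x: "x = gray lam mu n c" using xin by blast
      have "IA n c d = 0 \<and> IB n c d = 0" using d c unfolding Rdual_def R_ip by blast
      thus ?thesis unfolding x e gray_ip[OF hl hs] by simp
    qed
    ultimately show "e \<in> Fdual (2*n) (gray lam mu n ` C)" unfolding Fdual_def by blast
  qed
next
  show "Fdual (2*n) (gray lam mu n ` C) \<subseteq> gray lam mu n ` Rdual n C"
  proof
    fix e assume eF: "e \<in> Fdual (2*n) (gray lam mu n ` C)"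
    hence ew: "\<And>i. i \<ge> 2*n \<Longrightarrow> e i = 0" unfolding Fdual_def Fwords_def by blast
    define d where "d = (\<lambda>i. if i < n then ((lam * e (i+n) + e i) / 2, - e i) else (0, 0))"
    have ge: "gray lam mu n d = e"
    proof
      fix i
      show "gray lam mu n d i = e i"
      proof (cases "i < n")
        case True
        have "lam * (lam + mu) = -1" using hl hs by (simp add: algebra_simps)
        thus ?thesis using True unfolding gray_def d_def by simp
      next
        case False
        show ?thesis
        proof (cases "i < 2*n")
          case True
          have j: "i - n < n" "i - n + n = i" using True False by auto
          have "- mu * ((lam * e i + e (i - n)) / 2) - (lam + mu) * - e (i - n)
                = lam * lam * e i" using hs two by (simp add: field_simps)
          thus ?thesis using True False j hl unfolding gray_def d_def by simp
        next
          case False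
          thus ?thesis using \<open>\<not> i < n\<close> ew unfolding gray_def d_def by simp
        qed
      qed
    qed
    have "d \<in> Rdual n C"
      unfolding Rdual_def
    proof (intro CollectI conjI ballI)
      show "d \<in> Rwords n" unfolding Rwords_def d_def by simp
      fix c assume c: "c \<in> C"
      have c1: "gray lam mu n (\<lambda>i. Rmul (0,1) (c i)) \<in> gray lam mu n ` C" using mulC[OF c] by blast
      have c2: "gray lam mu n (\<lambda>i. Rmul (1,-1) (c i)) \<in> gray lam mu n ` C" using mulC[OF c] by blast
      have "(\<Sum>i<2*n. gray lam mu n (\<lambda>i. Rmul (0,1) (c i)) i * e i) = 0"
        using eF c1 unfolding Fdual_def by blast
      hence "2 * (IA n (\<lambda>i. Rmul (0,1) (c i)) d + IB n (\<lambda>i. Rmul (0,1) (c i)) d) = 0"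
        unfolding ge[symmetric] gray_ip[OF hl hs] .
      hence "2 * (IA n c d + 0) = 0" unfolding IA_v IB_v .
      moreover
      have "(\<Sum>i<2*n. gray lam mu n (\<lambda>i. Rmul (1,-1) (c i)) i * e i) = 0"
        using eF c2 unfolding Fdual_def by blast
      hence "2 * (IA n (\<lambda>i. Rmul (1,-1) (c i)) d + IB n (\<lambda>i. Rmul (1,-1) (c i)) d) = 0"
        unfolding ge[symmetric] gray_ip[OF hl hs] .
      hence "2 * (0 + IB n c d) = 0" unfolding IA_w IB_w .
      ultimately have "IA n c d = 0 \<and> IB n c d = 0" using two by simp
      thus "((\<Sum>i<n. fst (Rmul (c i) (d i))), (\<Sum>i<n. snd (Rmul (c i) (d i)))) = (0, 0)"
        unfolding R_ip .
    qed
    thus "e \<in> gray lam mu n ` Rdual n C" using ge by blast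
  qed
qed


lemma two_nz:
  assumes "odd (card (UNIV :: 'a::{finite,field} set))"
  shows "(2::'a) \<noteq> 0"
proof (rule notI)
  assume two: "(2::'a) = 0"
  have pp: "x + 1 + 1 = x" for x :: 'a
    using two by (metis add.assoc add_0_right one_add_one)
  have ne: "x + 1 \<noteq> x" for x :: 'a by simp
  let ?C = "(\<lambda>x::'a. {x, x+1}) ` UNIV"
  have "2 * card ?C = card (\<Union>?C)"
  proof (rule card_partition)
    show "finite ?C" by simp
    show "finite (\<Union>?C)" by simp
    show "card c = 2" if cC: "c \<in> ?C" for c
    proof -
      obtain x where "c = {x, x+1}" using cC by blast
      thus "card c = 2" using ne[of x] by simp
    qed
    show "c1 \<inter> c2 = {}" if c1: "c1 \<in> ?C" and c2: "c2 \<in> ?C" and d: "c1 \<noteq> c2" for c1 c2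
    proof -
      obtain x y where x: "c1 = {x, x+1}" and y: "c2 = {y, y+1}" using c1 c2 by blast
      have "x \<noteq> y" "x \<noteq> y + 1" "x + 1 \<noteq> y"
        using d pp[of y] pp[of x] x y by auto
      moreover have "x + 1 \<noteq> y + 1" using \<open>x \<noteq> y\<close> by simp
      ultimately show "c1 \<inter> c2 = {}" using x y by auto
    qed
  qed
  moreover have "\<Union>?C = UNIV" by auto
  ultimately show False using assms by (metis dvd_triv_left)
qed



definition topoly :: "nat \<Rightarrow> (nat \<Rightarrow> 'a::comm_ring_1) \<Rightarrow> 'a poly" where
  "topoly n f = (\<Sum>i<n. monom (f i) i)"

lemma coeff_topoly: "coeff (topoly n f) j = (if j < n then f j else 0)"
  unfolding topoly_def coeff_sum coeff_monom by (simp add: sum.delta)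

lemma degree_topoly: "n > 0 \<Longrightarrow> degree (topoly n f) < n"
proof -
  assume n: "n > 0"
  have "degree (topoly n f) \<le> n - 1" by (rule degree_le) (auto simp: coeff_topoly)
  thus ?thesis using n by simp
qed

lemma topoly_coeff: "degree p < n \<Longrightarrow> topoly n (coeff p) = p"
  by (rule poly_eqI) (auto simp: coeff_topoly coeff_eq_0)

lemma X_Mp: "monom 1 m - (1::'a::comm_ring_1 poly) = Mp 1 m"
  by (simp add: Mp_def one_pCons)

lemma cyc_char:
  fixes G :: "'a::field poly"
  assumes m: "m > 0" and GX: "G dvd monom 1 m - 1"
  shows "cyc_code m G = {(\<lambda>i. coeff w i) | w. degree w < m \<and> G dvd w}"
proof
  show "cyc_code m G \<subseteq> {(\<lambda>i. coeff w i) | w. degree w < m \<and> G dvd w}"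
  proof
    fix c assume "c \<in> cyc_code m G"
    then obtain f where c: "c = (\<lambda>i. coeff ((G * f) mod (monom 1 m - 1)) i)"
      unfolding cyc_code_def by blast
    let ?w = "(G * f) mod (monom 1 m - 1)"
    have "degree ?w < m" unfolding X_Mp by (rule deg_mod_Mp[OF m])
    moreover have "G dvd ?w"
    proof -
      have "?w = G * f - (monom 1 m - 1) * ((G * f) div (monom 1 m - 1))"
        by (simp add: minus_div_mult_eq_mod[symmetric])
      thus ?thesis using GX by (metis dvd_diff dvd_mult2 dvd_triv_left)
    qed
    ultimately show "c \<in> {(\<lambda>i. coeff w i) | w. degree w < m \<and> G dvd w}" using c by blast
  qed
next
  show "{(\<lambda>i. coeff w i) | w. degree w < m \<and> G dvd w} \<subseteq> cyc_code m G"
  proof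
    fix c assume "c \<in> {(\<lambda>i. coeff w i) | w. degree w < m \<and> G dvd w}"
    then obtain w where c: "c = (\<lambda>i. coeff w i)" and dw: "degree w < m" and Gw: "G dvd w" by blast
    obtain f where f: "w = G * f" using Gw by blast
    have "w mod (monom 1 m - 1) = w"
      by (rule mod_poly_less) (simp add: X_Mp degree_Mp[OF m] dw)
    hence "c = (\<lambda>i. coeff ((G * f) mod (monom 1 m - 1)) i)" using c f by simp
    thus "c \<in> cyc_code m G" unfolding cyc_code_def by blast
  qed
qed

lemma Mp_prod:
  fixes lam :: "'a::field"
  assumes hl: "lam * lam = 1"
  shows "Mp (-lam) n * Mp lam n = monom 1 (2*n) - 1"
proof -
  have "Mp (-lam) n * Mp lam n = (monom 1 n + [:lam:]) * (monom 1 n - [:lam:])"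
    by (simp add: Mp_def)
  also have "\<dots> = monom 1 n * monom 1 n - [:lam:] * [:lam:]" by (simp add: algebra_simps)
  also have "\<dots> = monom 1 (2*n) - 1" using hl by (simp add: mult_monom mult_2 one_pCons)
  finally show ?thesis .
qed

definition GPf :: "'a::comm_ring_1 \<Rightarrow> nat \<Rightarrow> 'a poly \<Rightarrow> 'a poly \<Rightarrow> 'a poly" where
  "GPf lam n a b = (b - a) + monom lam n * (a + b)"

lemma gray_W0:
  fixes lam mu :: "'a::field"
  assumes hl: "lam * lam = 1" and hs: "mu = -2*lam"
    and da: "degree a < n" and db: "degree b < n"
  shows "gray lam mu n (\<lambda>i. if i < n then (coeff b i, coeff a i - coeff b i) else (0,0))
       = (\<lambda>i. coeff (GPf lam n a b) i)"
proof
  fix i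
  show "gray lam mu n (\<lambda>i. if i < n then (coeff b i, coeff a i - coeff b i) else (0,0)) i
       = coeff (GPf lam n a b) i"
  proof (cases "i < n")
    case True
    have l: "lam * (lam + mu) = -1" using hl hs by (simp add: algebra_simps)
    have "coeff (monom lam n * (a+b)) i = 0" using True by (simp add: coeff_monom_mult)
    thus ?thesis using True l unfolding gray_def GPf_def by simp
  next
    case False
    have ca: "coeff a i = 0" "coeff b i = 0" using False da db by (auto intro: coeff_eq_0)
    show ?thesis
    proof (cases "i < 2*n")
      case True
      have j: "i - n < n" using True False by auto
      have cm: "coeff (monom lam n * (a+b)) i = lam * (coeff a (i-n) + coeff b (i-n))"
        using False by (simp add: coeff_monom_mult)
      have e: "- mu * coeff b (i-n) - (lam + mu) * (coeff a (i-n) - coeff b (i-n))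
           = lam * (coeff a (i-n) + coeff b (i-n))" using hs by (simp add: algebra_simps)
      show ?thesis using True False ca j unfolding gray_def GPf_def coeff_add coeff_diff cm
        using e by simp
    next
      case False
      have "coeff a (i-n) = 0" "coeff b (i-n) = 0" using False da db by (auto intro: coeff_eq_0)
      thus ?thesis using False ca \<open>\<not> i < n\<close> unfolding gray_def GPf_def
        by (simp add: coeff_monom_mult)
    qed
  qed
qed

lemma gray_W:
  fixes lam mu :: "'a::field"
  assumes n: "n > 0" and hl: "lam * lam = 1" and hs: "mu = -2*lam"
  shows "gray lam mu n (W lam mu n P Q) = (\<lambda>i. coeff (GPf lam n (P mod Mp (lam+mu) n) (Q mod Mp lam n)) i)"
  unfolding W_def by (rule gray_W0[OF hl hs deg_mod_Mp[OF n] deg_mod_Mp[OF n]])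

lemma smult_m2: "smult (-2) (p::'a::comm_ring_1 poly) = - p - p"
proof (rule poly_eqI)
  fix k
  have "(-2::'a) * coeff p k = - coeff p k - coeff p k" by (simp only: mult_minus_left mult_2 minus_add_distrib diff_conv_add_uminus)
  thus "coeff (smult (-2) p) k = coeff (- p - p) k" by (simp only: coeff_smult coeff_diff coeff_minus)
qed

lemma smult_2: "smult 2 (p::'a::comm_ring_1 poly) = p + p"
proof (rule poly_eqI)
  fix k
  have "(2::'a) * coeff p k = coeff p k + coeff p k" by (rule mult_2)
  thus "coeff (smult 2 p) k = coeff (p + p) k" by (simp only: coeff_smult coeff_add)
qed

lemma ID1:
  fixes lam :: "'a::field"
  assumes hl: "lam * lam = 1"
  shows "GPf lam n a b = smult (-2) a + smult lam ((a+b) * Mp (-lam) n)"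
proof -
  have "smult lam ((a+b) * Mp (-lam) n) = smult lam ((a+b) * monom 1 n) + smult (lam*lam) (a+b)"
    by (simp add: Mp_def ring_distribs smult_add_right smult_diff_right)
  also have "\<dots> = monom lam n * (a+b) + (a+b)" using hl
    by (simp add: smult_monom mult_smult_right[symmetric] mult.commute)
  finally have S: "smult lam ((a+b) * Mp (-lam) n) = monom lam n * (a+b) + (a+b)" .
  show ?thesis unfolding GPf_def S smult_m2 by (simp add: algebra_simps)
qed

lemma ID2:
  fixes lam :: "'a::field"
  assumes hl: "lam * lam = 1"
  shows "GPf lam n a b = smult 2 b + smult lam ((a+b) * Mp lam n)"
proof -
  have "smult lam ((a+b) * Mp lam n) = smult lam ((a+b) * monom 1 n) - smult (lam*lam) (a+b)"
    by (simp add: Mp_def ring_distribs smult_add_right smult_diff_right)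
  also have "\<dots> = monom lam n * (a+b) - (a+b)" using hl
    by (simp add: smult_monom mult_smult_right[symmetric] mult.commute)
  finally have S: "smult lam ((a+b) * Mp lam n) = monom lam n * (a+b) - (a+b)" .
  show ?thesis unfolding GPf_def S smult_2 by (simp add: algebra_simps)
qed



lemma dvd_both:
  fixes g1 g2 c M1 M2 :: "'a::field poly"
  assumes d1: "g1 dvd M1" and d2: "g2 dvd M2" and e: "M1 - M2 = [:e:]" "e \<noteq> 0"
    and c1: "g1 dvd c" and c2: "g2 dvd c"
  shows "g1 * g2 dvd c"
proof -
  obtain p1 where p1: "M1 = g1 * p1" using d1 by blast
  obtain p2 where p2: "M2 = g2 * p2" using d2 by blast
  obtain q1 where q1: "c = g1 * q1" using c1 by blast
  obtain q2 where q2: "c = g2 * q2" using c2 by blast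
  have "c * M1 = (g1 * g2) * (q2 * p1)" using p1 q2 by (simp add: ac_simps)
  moreover have "c * M2 = (g1 * g2) * (q1 * p2)" using p2 q1 by (simp add: ac_simps)
  ultimately have "g1 * g2 dvd c * M1 - c * M2" by (metis dvd_diff dvd_triv_left)
  also have "c * M1 - c * M2 = smult e c" by (simp add: right_diff_distrib[symmetric] e)
  finally show ?thesis using e(2) by (rule dvd_smult_cancel)
qed

lemma half2:
  assumes two: "(2::'a::field) \<noteq> 0"
  shows "inverse 2 * (x + x) = (x::'a)"
proof -
  have "x + x = 2 * x" by (rule mult_2[symmetric])
  thus ?thesis using two by simp
qed

lemma degree_lt_by_coeff:
  assumes "m > 0" "\<And>i. i \<ge> m \<Longrightarrow> coeff p i = 0"
  shows "degree p < m"
proof -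
  have "degree p \<le> m - 1" by (rule degree_le) (use assms in auto)
  thus ?thesis using assms(1) by simp
qed

lemma L2:
  fixes lam mu :: "'a::field" and g1 g2 :: "'a poly"
  assumes n: "n > 0" and hl: "lam * lam = 1" and hs: "mu = -2*lam" and two: "(2::'a) \<noteq> 0"
    and d1: "g1 dvd Mp (lam+mu) n" and d2: "g2 dvd Mp lam n"
    and Cc: "C = {W lam mu n (g1*u) (g2*w) | u w. True}"
  shows "gray lam mu n ` C = cyc_code (2*n) (g1*g2)"
proof -
  have s1: "lam + mu = -lam" using hs by simp
  have d1': "g1 dvd Mp (-lam) n" using d1 s1 by simp
  have m: "2*n > 0" using n by simp
  have GX: "g1*g2 dvd monom 1 (2*n) - 1"
    unfolding Mp_prod[OF hl, of n, symmetric] using d1' d2 by (rule mult_dvd_mono)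
  have MM: "Mp (-lam) n - Mp lam n = [:lam + lam:]" by (simp add: Mp_def)
  have l0: "lam \<noteq> 0" using hl by auto
  have lz: "lam + lam \<noteq> 0"
  proof
    assume "lam + lam = 0"
    hence "2 * lam = 0" by (simp only: mult_2)
    thus False using two l0 by simp
  qed
  have degM: "degree (Mp s n) = n" for s :: 'a using degree_Mp[OF n] .
  show ?thesis unfolding cyc_char[OF m GX] Cc
  proof
    show "gray lam mu n ` {W lam mu n (g1*u) (g2*w) | u w. True}
          \<subseteq> {(\<lambda>i. coeff w i) | w. degree w < 2*n \<and> g1*g2 dvd w}"
    proof
      fix x assume "x \<in> gray lam mu n ` {W lam mu n (g1*u) (g2*w) | u w. True}"
      then obtain u w where x: "x = gray lam mu n (W lam mu n (g1*u) (g2*w))" by blast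
      define a where "a = (g1*u) mod Mp (-lam) n"
      define b where "b = (g2*w) mod Mp lam n"
      have xe: "x = (\<lambda>i. coeff (GPf lam n a b) i)"
        unfolding x gray_W[OF n hl hs] a_def b_def s1 ..
      have "degree (GPf lam n a b) < 2*n"
      proof (rule degree_lt_by_coeff[OF m])
        fix i assume "i \<ge> 2*n"
        hence "x i = 0" unfolding x gray_def by simp
        thus "coeff (GPf lam n a b) i = 0" using xe by simp
      qed
      moreover have "g1*g2 dvd GPf lam n a b"
      proof (rule dvd_both[OF d1' d2 MM lz])
        have "g1 dvd a" unfolding a_def by (rule dvd_mod[OF _ d1']) simp
        thus "g1 dvd GPf lam n a b" unfolding ID1[OF hl, of n a b]
          using d1' by (intro dvd_add dvd_smult) (auto intro: dvd_mult)
        have "g2 dvd b" unfolding b_def by (rule dvd_mod[OF _ d2]) simp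
        thus "g2 dvd GPf lam n a b" unfolding ID2[OF hl, of n a b]
          using d2 by (intro dvd_add dvd_smult) (auto intro: dvd_mult)
      qed
      ultimately show "x \<in> {(\<lambda>i. coeff w i) | w. degree w < 2*n \<and> g1*g2 dvd w}"
        using xe by blast
    qed
  next
    show "{(\<lambda>i. coeff w i) | w. degree w < 2*n \<and> g1*g2 dvd w}
          \<subseteq> gray lam mu n ` {W lam mu n (g1*u) (g2*w) | u w. True}"
    proof
      fix x assume "x \<in> {(\<lambda>i. coeff w i) | w. degree w < 2*n \<and> g1*g2 dvd w}"
      then obtain w where x: "x = (\<lambda>i. coeff w i)" and dw: "degree w < 2*n" and Gw: "g1*g2 dvd w"
        by blast
      define low where "low = topoly n (coeff w)"
      define high where "high = topoly n (\<lambda>i. coeff w (i+n))"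
      have wsplit: "w = low + monom 1 n * high"
      proof (rule poly_eqI)
        fix i
        show "coeff w i = coeff (low + monom 1 n * high) i"
        proof (cases "i < n")
          case True thus ?thesis by (simp add: low_def high_def coeff_topoly coeff_monom_mult)
        next
          case False
          show ?thesis
          proof (cases "i < 2*n")
            case True thus ?thesis using False by (simp add: low_def high_def coeff_topoly coeff_monom_mult)
          next
            case False
            thus ?thesis using \<open>\<not> i < n\<close> dw by (simp add: low_def high_def coeff_topoly coeff_monom_mult coeff_eq_0)
          qed
        qed
      qed
      define a where "a = smult (inverse 2) (smult lam high - low)"
      define b where "b = smult (inverse 2) (low + smult lam high)"
      have ba: "b - a = low"
      proof (rule poly_eqI)
        fix k
        have "coeff (b - a) k = inverse 2 * ((coeff low k + lam * coeff high k) - (lam * coeff high k - coeff low k))"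
          unfolding a_def b_def coeff_diff coeff_add coeff_smult right_diff_distrib by (rule refl)
        also have "(coeff low k + lam * coeff high k) - (lam * coeff high k - coeff low k) = coeff low k + coeff low k"
          by simp
        finally show "coeff (b - a) k = coeff low k" using half2[OF two] by simp
      qed
      have ab: "a + b = smult lam high"
      proof (rule poly_eqI)
        fix k
        have "coeff (a + b) k = inverse 2 * ((lam * coeff high k - coeff low k) + (coeff low k + lam * coeff high k))"
          unfolding a_def b_def coeff_diff coeff_add coeff_smult distrib_left by (rule refl)
        also have "(lam * coeff high k - coeff low k) + (coeff low k + lam * coeff high k) = lam * coeff high k + lam * coeff high k"
          by simp
        finally show "coeff (a + b) k = coeff (smult lam high) k" using half2[OF two] by simp
      qed
      have GPw: "GPf lam n a b = w"
      proof -
        have "monom lam n * smult lam high = monom 1 n * high"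
          using hl by (simp add: mult_smult_right smult_monom_mult)
        thus ?thesis unfolding GPf_def ba ab wsplit by simp
      qed
      have da: "degree a < n"
        by (rule degree_lt_by_coeff[OF n]) (simp add: a_def low_def high_def coeff_topoly)
      have db: "degree b < n"
        by (rule degree_lt_by_coeff[OF n]) (simp add: b_def low_def high_def coeff_topoly)
      have g1w: "g1 dvd w" and g2w: "g2 dvd w" using Gw dvd_mult_left dvd_mult_right by blast+
      have "g1 dvd smult (-2) a"
      proof -
        have "smult (-2) a = w - smult lam ((a+b) * Mp (-lam) n)"
          using ID1[OF hl, of n a b] GPw by simp
        thus ?thesis using g1w d1' by (metis dvd_diff dvd_smult dvd_mult)
      qed
      hence g1a: "g1 dvd a" by (rule dvd_smult_cancel) (use two in simp)
      have "g2 dvd smult 2 b"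
      proof -
        have "smult 2 b = w - smult lam ((a+b) * Mp lam n)"
          using ID2[OF hl, of n a b] GPw by simp
        thus ?thesis using g2w d2 by (metis dvd_diff dvd_smult dvd_mult)
      qed
      hence g2b: "g2 dvd b" by (rule dvd_smult_cancel) (use two in simp)
      obtain u where u: "a = g1 * u" using g1a by blast
      obtain v where v: "b = g2 * v" using g2b by blast
      have am: "a mod Mp (lam+mu) n = a" by (rule mod_poly_less) (simp add: degM da)
      have bm: "b mod Mp lam n = b" by (rule mod_poly_less) (simp add: degM db)
      have "x = gray lam mu n (W lam mu n (g1*u) (g2*v))"
        unfolding gray_W[OF n hl hs] u[symmetric] v[symmetric] am bm GPw x ..
      thus "x \<in> gray lam mu n ` {W lam mu n (g1*u) (g2*w) | u w. True}" by blast
    qed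
  qed
qed



definition rv :: "nat \<Rightarrow> 'a::comm_ring_1 poly \<Rightarrow> 'a poly" where
  "rv m w = (\<Sum>i<m. monom (coeff w i) (m - 1 - i))"

lemma coeff_rv: "coeff (rv m w) j = (if j < m then coeff w (m - 1 - j) else 0)"
proof -
  have "coeff (rv m w) j = (\<Sum>i<m. if i = m - 1 - j then (if j < m then coeff w i else 0) else 0)"
    unfolding rv_def coeff_sum coeff_monom
    by (rule sum.cong) auto
  also have "\<dots> = (if j < m then coeff w (m - 1 - j) else 0)"
    by (subst sum.delta) auto
  finally show ?thesis .
qed

lemma degree_rv: "m > 0 \<Longrightarrow> degree (rv m w) < m"
  by (rule degree_lt_by_coeff) (auto simp: coeff_rv)

lemma rv_rv: "degree w < m \<Longrightarrow> rv m (rv m w) = w"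
  by (rule poly_eqI) (auto simp: coeff_rv coeff_eq_0)

lemma rv_reflect:
  assumes w: "w \<noteq> 0" and dw: "degree w < m"
  shows "rv m w = monom 1 (m - 1 - degree w) * reflect_poly w"
proof (rule poly_eqI)
  fix j
  show "coeff (rv m w) j = coeff (monom 1 (m - 1 - degree w) * reflect_poly w) j"
    using dw by (auto simp: coeff_rv coeff_monom_mult coeff_reflect_poly coeff_eq_0)
qed

lemma ip_coeff:
  fixes U w :: "'a::field poly"
  assumes m: "m > 0" and dU: "degree U < m"
  shows "(\<Sum>i<m. coeff U i * coeff w i) = coeff ((U * rv m w) mod Mp 1 m) (m - 1)"
proof -
  let ?Z = "U * rv m w"
  have dZ: "degree ?Z \<le> 2*m - 2"
    using degree_mult_le[of U "rv m w"] dU degree_rv[OF m, of w] by simp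
  have "coeff (?Z mod Mp 1 m) (m - 1) = red 1 m (degree ?Z) ?Z (m - 1)"
    using m by (intro GM) auto
  also have "\<dots> = coeff ?Z (m - 1)"
  proof -
    have "coeff ?Z (Suc k * m + (m - 1)) = 0" for k
      by (rule coeff_eq_0) (use dZ m in \<open>simp add: algebra_simps\<close>)
    thus ?thesis by (simp add: red_split)
  qed
  also have "\<dots> = (\<Sum>i\<le>m-1. coeff U i * coeff (rv m w) (m - 1 - i))" by (rule coeff_mult)
  also have "\<dots> = (\<Sum>i<m. coeff U i * coeff w i)"
  proof -
    have "{..m-1} = {..<m}" using m by auto
    thus ?thesis using m by (auto simp: coeff_rv intro!: sum.cong)
  qed
  finally show ?thesis by simp
qed

lemma monom_Suc_mult: "monom 1 (Suc j) * Z = pCons 0 (monom 1 j * (Z::'a::comm_ring_1 poly))"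
  by (simp add: monom_Suc)

lemma kernel:
  fixes Z :: "'a::field poly"
  assumes m: "m > 0" and h: "\<And>f. coeff ((f * Z) mod Mp 1 m) (m - 1) = 0"
  shows "Mp 1 m dvd Z"
proof -
  have sh: "i + j < m \<Longrightarrow> coeff ((monom 1 j * Z) mod Mp 1 m) (i + j) = coeff (Z mod Mp 1 m) i" for i j
  proof (induction j arbitrary: i)
    case 0 thus ?case by simp
  next
    case (Suc j)
    have "coeff ((monom 1 (Suc j) * Z) mod Mp 1 m) (i + Suc j)
        = coeff ((monom 1 j * Z) mod Mp 1 m) (i + j)"
      unfolding monom_Suc_mult using SHc[OF m Suc.prems, of "monom 1 j * Z" 1] by simp
    also have "\<dots> = coeff (Z mod Mp 1 m) i" using Suc by simp
    finally show ?case .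
  qed
  have "Z mod Mp 1 m = 0"
  proof (rule poly_eqI)
    fix i
    show "coeff (Z mod Mp 1 m) i = coeff 0 i"
    proof (cases "i < m")
      case True
      have "coeff (Z mod Mp 1 m) i = coeff ((monom 1 (m - 1 - i) * Z) mod Mp 1 m) (i + (m - 1 - i))"
        using sh[of i "m - 1 - i"] True by simp
      also have "i + (m - 1 - i) = m - 1" using True by simp
      finally show ?thesis using h by simp
    next
      case False
      thus ?thesis using deg_mod_Mp[OF m, of Z 1] by (simp add: coeff_eq_0)
    qed
  qed
  thus ?thesis by (simp add: dvd_eq_mod_eq_0)
qed



lemma orth_iff:
  fixes G wp :: "'a::field poly"
  assumes m: "m > 0"
  shows "(\<forall>f. (\<Sum>i<m. coeff ((G*f) mod Mp 1 m) i * coeff wp i) = 0) \<longleftrightarrow> Mp 1 m dvd G * rv m wp"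
proof -
  have eq: "(\<Sum>i<m. coeff ((G*f) mod Mp 1 m) i * coeff wp i) = coeff ((f * (G * rv m wp)) mod Mp 1 m) (m - 1)" for f
  proof -
    have "(\<Sum>i<m. coeff ((G*f) mod Mp 1 m) i * coeff wp i)
        = coeff (((G*f) mod Mp 1 m * rv m wp) mod Mp 1 m) (m - 1)"
      by (rule ip_coeff[OF m deg_mod_Mp[OF m]])
    also have "((G*f) mod Mp 1 m * rv m wp) mod Mp 1 m = ((G*f) * rv m wp) mod Mp 1 m"
      by (rule mod_mult_left_eq)
    also have "(G*f) * rv m wp = f * (G * rv m wp)" by (simp add: ac_simps)
    finally show ?thesis .
  qed
  show ?thesis unfolding eq
  proof
    assume "\<forall>f. coeff (f * (G * rv m wp) mod Mp 1 m) (m - 1) = 0"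
    thus "Mp 1 m dvd G * rv m wp" using kernel[OF m] by blast
  next
    assume d: "Mp 1 m dvd G * rv m wp"
    show "\<forall>f. coeff (f * (G * rv m wp) mod Mp 1 m) (m - 1) = 0"
    proof
      fix f
      have "Mp 1 m dvd f * (G * rv m wp)" using d by (rule dvd_mult)
      hence "f * (G * rv m wp) mod Mp 1 m = 0" by (simp add: dvd_eq_mod_eq_0)
      thus "coeff (f * (G * rv m wp) mod Mp 1 m) (m - 1) = 0" by simp
    qed
  qed
qed

lemma dual_dvd:
  fixes G H w :: "'a::field poly"
  assumes m: "m > 0" and dw: "degree w < m" and H0: "coeff H 0 \<noteq> 0"
    and GH: "G * H = Mp 1 m"
  shows "Mp 1 m dvd G * rv m w \<longleftrightarrow> reflect_poly H dvd w"
proof -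
  have G0: "G \<noteq> 0" using GH Mp_nz[OF m, of 1] by auto
  have "Mp 1 m dvd G * rv m w \<longleftrightarrow> H dvd rv m w"
    unfolding GH[symmetric] using G0 by simp
  also have "\<dots> \<longleftrightarrow> reflect_poly H dvd w"
  proof
    assume "H dvd rv m w"
    then obtain k where k: "rv m w = H * k" by blast
    show "reflect_poly H dvd w"
    proof (cases "w = 0")
      case False
      have r0: "rv m 0 = 0" unfolding rv_def by simp
      have rvnz: "rv m w \<noteq> 0"
      proof
        assume "rv m w = 0"
        hence "rv m (rv m w) = 0" using r0 by simp
        thus False using False rv_rv[OF dw] by simp
      qed
      hence rvn: "H * k \<noteq> 0" using k by simp
      have "w = rv m (rv m w)" using rv_rv[OF dw] by simp
      also have "\<dots> = monom 1 (m - 1 - degree (rv m w)) * reflect_poly (rv m w)"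
        by (rule rv_reflect[OF rvnz degree_rv[OF m]])
      also have "\<dots> = monom 1 (m - 1 - degree (rv m w)) * (reflect_poly H * reflect_poly k)"
        unfolding k reflect_poly_mult ..
      finally have "w = reflect_poly H * (monom 1 (m - 1 - degree (rv m w)) * reflect_poly k)"
        by (simp add: ac_simps)
      thus ?thesis by (rule dvdI)
    qed simp
  next
    assume "reflect_poly H dvd w"
    then obtain k where k: "w = reflect_poly H * k" by blast
    show "H dvd rv m w"
    proof (cases "w = 0")
      case True
      have "rv m w = 0" using True unfolding rv_def by simp
      thus ?thesis by simp
    next
      case False
      have "rv m w = monom 1 (m - 1 - degree w) * reflect_poly w"
        by (rule rv_reflect[OF False dw])
      also have "reflect_poly w = H * reflect_poly k"
        unfolding k reflect_poly_mult reflect_poly_reflect_poly[OF H0] ..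
      finally have "rv m w = H * (monom 1 (m - 1 - degree w) * reflect_poly k)"
        by (simp add: ac_simps)
      thus ?thesis by (rule dvdI)
    qed
  qed
  finally show ?thesis .
qed

lemma reflect_X:
  assumes m: "m > 0"
  shows "reflect_poly (Mp (1::'a::field) m) = - Mp 1 m"
proof (rule poly_eqI)
  fix j
  show "coeff (reflect_poly (Mp (1::'a) m)) j = coeff (- Mp 1 m) j"
    using m by (auto simp: coeff_reflect_poly degree_Mp coeff_Mp)
qed

lemma L1:
  fixes G H :: "'a::field poly"
  assumes m: "m > 0" and GH: "G * H = monom 1 m - 1"
  shows "Fdual m (cyc_code m G) = cyc_code m (recip H)"
proof -
  have GH': "G * H = Mp 1 m" using GH by (simp add: X_Mp)
  have H0: "coeff H 0 \<noteq> 0"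
  proof -
    have "coeff G 0 * coeff H 0 = coeff (Mp 1 m) 0" unfolding GH'[symmetric] coeff_mult_0 ..
    also have "\<dots> = -1" using m by (simp add: coeff_Mp)
    finally show ?thesis by auto
  qed
  have GX: "G dvd monom 1 m - 1" using GH by (metis dvd_triv_left)
  have "reflect_poly G * reflect_poly H = - Mp 1 m"
    unfolding reflect_poly_mult[symmetric] GH' reflect_X[OF m] ..
  hence HrX: "reflect_poly H dvd Mp 1 m"
    by (metis dvd_minus_iff dvd_triv_right)
  have rdvd: "recip H dvd p \<longleftrightarrow> reflect_poly H dvd p" for p
    unfolding recip_def smult_dvd_iff using H0 by simp
  have RX: "recip H dvd monom 1 m - 1" unfolding rdvd X_Mp by (rule HrX)
  show ?thesis unfolding cyc_char[OF m RX] rdvd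
  proof
    show "Fdual m (cyc_code m G) \<subseteq> {coeff w |w. degree w < m \<and> reflect_poly H dvd w}"
    proof
      fix d assume d: "d \<in> Fdual m (cyc_code m G)"
      define wp where "wp = topoly m d"
      have dw: "degree wp < m" unfolding wp_def by (rule degree_topoly[OF m])
      have dcoeff: "d = coeff wp"
      proof
        fix i show "d i = coeff wp i"
          using d unfolding wp_def coeff_topoly Fdual_def Fwords_def by auto
      qed
      have "\<forall>f. (\<Sum>i<m. coeff ((G*f) mod Mp 1 m) i * coeff wp i) = 0"
      proof
        fix f
        have "(\<lambda>i. coeff ((G * f) mod (monom 1 m - 1)) i) \<in> cyc_code m G"
          unfolding cyc_code_def by blast
        thus "(\<Sum>i<m. coeff ((G*f) mod Mp 1 m) i * coeff wp i) = 0"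
          using d unfolding Fdual_def dcoeff X_Mp by blast
      qed
      hence "Mp 1 m dvd G * rv m wp" unfolding orth_iff[OF m] .
      hence "reflect_poly H dvd wp" unfolding dual_dvd[OF m dw H0 GH'] .
      thus "d \<in> {coeff w |w. degree w < m \<and> reflect_poly H dvd w}" using dw dcoeff by blast
    qed
  next
    show "{coeff w |w. degree w < m \<and> reflect_poly H dvd w} \<subseteq> Fdual m (cyc_code m G)"
    proof
      fix d assume "d \<in> {coeff w |w. degree w < m \<and> reflect_poly H dvd w}"
      then obtain w where d: "d = coeff w" and dw: "degree w < m" and Hw: "reflect_poly H dvd w" by blast
      have "Mp 1 m dvd G * rv m w" using Hw unfolding dual_dvd[OF m dw H0 GH'] .
      hence orth: "\<forall>f. (\<Sum>i<m. coeff ((G*f) mod Mp 1 m) i * coeff w i) = 0" unfolding orth_iff[OF m] .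
      have "d \<in> Fwords m" unfolding d Fwords_def using dw by (auto intro: coeff_eq_0)
      moreover have "(\<Sum>i<m. c i * d i) = 0" if cin: "c \<in> cyc_code m G" for c
      proof -
        obtain f where c: "c = (\<lambda>i. coeff ((G * f) mod (monom 1 m - 1)) i)"
          using cin unfolding cyc_code_def by blast
        show ?thesis using orth unfolding c d X_Mp by blast
      qed
      ultimately show "d \<in> Fdual m (cyc_code m G)" unfolding Fdual_def by blast
    qed
  qed
qed



lemma recip_mult:
  fixes h1 h2 :: "'a::field poly"
  shows "recip (h1 * h2) = recip h1 * recip h2"
  unfolding recip_def coeff_mult_0 reflect_poly_mult
  by (simp add: mult_smult_left mult_smult_right mult.commute)

theorem theorem3p17:
  fixes p n :: nat and lam mu :: "'a::{finite, field}"
    and C :: "(nat \<Rightarrow> 'a \<times> 'a) set"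
    and g1 g2 h1 h2 :: "'a poly"
  assumes "prime p" and "odd p" and "card (UNIV :: 'a set) = p"
    and "n > 0"
    and theta: "(lam = 1 \<and> mu = -2) \<or> (lam = -1 \<and> mu = 2)"
    and cc: "is_constacyclic (lam, mu) n C"
    and gen: "C = gen_code (lam, mu) n
               {polyword (lam, mu) n (0, g1), polyword (lam, mu) n (g2, - g2)}"
    and g1_form: "g1 = 0 \<or> lead_coeff g1 = 1" and g2_form: "g2 = 0 \<or> lead_coeff g2 = 1"
    and g1_dvd: "g1 \<noteq> 0 \<longrightarrow> g1 dvd monom 1 n - [:lam + mu:]"
    and g2_dvd: "g2 \<noteq> 0 \<longrightarrow> g2 dvd monom 1 n - [:lam:]"
    and h1: "g1 * h1 = monom 1 n - [:lam + mu:]"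
    and h2: "g2 * h2 = monom 1 n - [:lam:]"
  shows "gray lam mu n ` Rdual n C = cyc_code (2 * n) (recip h1 * recip h2) \<and>
         gray lam mu n ` Rdual n C = Fdual (2 * n) (gray lam mu n ` C)"
proof -
  note n = \<open>n > 0\<close>
  have "odd (card (UNIV :: 'a set))" using \<open>odd p\<close> \<open>card (UNIV :: 'a set) = p\<close> by simp
  hence two: "(2::'a) \<noteq> 0" by (rule two_nz)
  have hl: "lam * lam = 1" using theta by auto
  have hs: "mu = -2*lam" using theta by auto
  have s1: "lam + mu = -lam" using hs by simp
  have d1: "g1 dvd Mp (lam+mu) n" using h1 unfolding Mp_def by (metis dvd_triv_left)
  have d2: "g2 dvd Mp lam n" using h2 unfolding Mp_def by (metis dvd_triv_left)
  have Cc: "C = {W lam mu n (g1*u) (g2*w) | u w. True}" by (rule C_char[OF n cc gen])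
  have mulC: "\<And>a c. c \<in> C \<Longrightarrow> (\<lambda>i. Rmul a (c i)) \<in> C"
    using cc unfolding is_constacyclic_def by blast
  have P2: "gray lam mu n ` Rdual n C = Fdual (2 * n) (gray lam mu n ` C)"
    by (rule L3[OF hl hs two mulC])
  have GC: "gray lam mu n ` C = cyc_code (2*n) (g1*g2)"
    by (rule L2[OF n hl hs two d1 d2 Cc])
  have GH: "(g1*g2) * (h1*h2) = monom 1 (2*n) - 1"
  proof -
    have "(g1*g2) * (h1*h2) = (g1*h1) * (g2*h2)" by (simp add: ac_simps)
    also have "\<dots> = Mp (-lam) n * Mp lam n" unfolding h1 h2 Mp_def s1 ..
    also have "\<dots> = monom 1 (2*n) - 1" by (rule Mp_prod[OF hl])
    finally show ?thesis .
  qed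
  have "gray lam mu n ` Rdual n C = cyc_code (2 * n) (recip h1 * recip h2)"
    unfolding P2 GC recip_mult[symmetric] using n GH by (intro L1) auto
  thus ?thesis using P2 by blast
qed

end
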